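(* Let $A(l_1,l_2)\in\mathbb{C}[l_1,l_2]$ be a polynomial of degree at most $R$ in each of $l_1$ and $l_2$, and assume that $T_{l_1,l_2}A(l_1,l_2)$ has total degree at most $R$ (i.e. is a linear combination of monomials $l_1^ml_2^{m'}$ with $m+m'\le R$). Then $$\sum_{l_1=k_1}^{k_2}\sum_{l_2=k_2}^{k_3}A(l_1,l_2)-A(k_2,k_2)$$ is a polynomial in $k_1,k_2,k_3$ of degree at most $R+2$ in $k_2$. Moreover, if $T_{l_1,l_2}A(l_1,l_2)=0$, then this polynomial has degree at most $R+1$ in $k_2$.
   Context: Summation over an interval is extended to all integer endpoints: $\sum_{i=a}^b f(i)=f(a)+\cdots+f(b)$ if $a\le b$, $=0$ if $b=a-1$, and $=-f(b+1)-\cdots-f(a-1)$ if $b+1\le a-1$; with this convention sums of polynomials over intervals with polynomial endpoints are polynomials. $E_x$ denotes the shift $E_xf(x)=f(x+1)$, $E_x^{-1}$ its inverse, $\Delta_x=E_x-\operatorname{id}$, and $S_{x,y}$ the swap $S_{x,y}f(x,y)=f(y,x)$; products of operators are compositions. Define $V_{x,y}=\operatorname{id}+E_x^{-1}\Delta_x\Delta_y$ and $$T_{l_1,l_2}=(\operatorname{id}+E_{l_2}E_{l_1}^{-1}S_{l_1,l_2})\,(V_{l_1,l_2}+V_{l_2,l_1})^{-1}V_{l_1,l_2},$$ where $V_{l_1,l_2}+V_{l_2,l_1}=2\operatorname{id}+(E_{l_1}^{-1}+E_{l_2}^{-1})\Delta_{l_1}\Delta_{l_2}$ is invertible on $\mathbb{C}[l_1,l_2]$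 (its inverse is the finite-on-each-polynomial series $\tfrac12\sum_{j\ge0}(-\tfrac12)^j((E_{l_1}^{-1}+E_{l_2}^{-1})\Delta_{l_1}\Delta_{l_2})^j$). *)

theory Defs
  imports Complex_Main
begin

text \<open>Bivariate polynomials over the complex numbers are represented as
  polynomial functions of type complex \<Rightarrow> complex \<Rightarrow> complex.\<close>

type_synonym fun2 = "complex \<Rightarrow> complex \<Rightarrow> complex"

definition poly2 :: "fun2 \<Rightarrow> bool" where
  "poly2 f \<longleftrightarrow> (\<exists>n c. f = (\<lambda>x y. \<Sum>i\<le>n. \<Sum>j\<le>n. c i j * x ^ i * y ^ j))"

definition deg_each_le :: "fun2 \<Rightarrow> nat \<Rightarrow> bool" where
  "deg_each_le f R \<longleftrightarrow> (\<exists>c. f = (\<lambda>x y. \<Sum>i\<le>R. \<Sum>j\<le>R. c i j * x ^ i * y ^ j))"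

definition total_deg_le :: "fun2 \<Rightarrow> nat \<Rightarrow> bool" where
  "total_deg_le f R \<longleftrightarrow>
     (\<exists>c. f = (\<lambda>x y. \<Sum>(i,j)\<in>{(i,j). i + j \<le> R}. c i j * x ^ i * y ^ j))"

definition E1 :: "fun2 \<Rightarrow> fun2" where "E1 f = (\<lambda>x y. f (x + 1) y)"
definition E2 :: "fun2 \<Rightarrow> fun2" where "E2 f = (\<lambda>x y. f x (y + 1))"
definition E1inv :: "fun2 \<Rightarrow> fun2" where "E1inv f = (\<lambda>x y. f (x - 1) y)"
definition E2inv :: "fun2 \<Rightarrow> fun2" where "E2inv f = (\<lambda>x y. f x (y - 1))"
definition D1 :: "fun2 \<Rightarrow> fun2" where "D1 f = (\<lambda>x y. E1 f x y - f x y)"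
definition D2 :: "fun2 \<Rightarrow> fun2" where "D2 f = (\<lambda>x y. E2 f x y - f x y)"
definition Swap :: "fun2 \<Rightarrow> fun2" where "Swap f = (\<lambda>x y. f y x)"

definition V12 :: "fun2 \<Rightarrow> fun2" where
  "V12 f = (\<lambda>x y. f x y + E1inv (D1 (D2 f)) x y)"
definition V21 :: "fun2 \<Rightarrow> fun2" where
  "V21 f = (\<lambda>x y. f x y + E2inv (D2 (D1 f)) x y)"

definition Vsum_inv :: "fun2 \<Rightarrow> fun2" where
  "Vsum_inv h = (THE g. poly2 g \<and> (\<lambda>x y. V12 g x y + V21 g x y) = h)"

definition Top :: "fun2 \<Rightarrow> fun2" where
  "Top A = (let g = Vsum_inv (V12 A) in (\<lambda>x y. g x y + E2 (E1inv (Swap g)) x y))"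

text \<open>Sum over an interval with arbitrary integer endpoints (paper's convention).\<close>
definition isum :: "(int \<Rightarrow> complex) \<Rightarrow> int \<Rightarrow> int \<Rightarrow> complex" where
  "isum f a b = (if a \<le> b then (\<Sum>i=a..b. f i) else - (\<Sum>i=b+1..a-1. f i))"

definition poly3_deg2_le :: "(int \<Rightarrow> int \<Rightarrow> int \<Rightarrow> complex) \<Rightarrow> nat \<Rightarrow> bool" where
  "poly3_deg2_le P d \<longleftrightarrow> (\<exists>n c. \<forall>k1 k2 k3.
      P k1 k2 k3 = (\<Sum>a\<le>n. \<Sum>b\<le>d. \<Sum>e\<le>n.
         c a b e * of_int k1 ^ a * of_int k2 ^ b * of_int k3 ^ e))"

end

theory Submission
  imports Defs
begin

definition pin :: "(nat \<times> nat) set \<Rightarrow> fun2 \<Rightarrow> bool" where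
  "pin S f \<longleftrightarrow> (\<exists>c. f = (\<lambda>x y. \<Sum>(i,j)\<in>S. c i j * x ^ i * y ^ j))"

definition upin :: "nat \<Rightarrow> (complex \<Rightarrow> complex) \<Rightarrow> bool" where
  "upin n p \<longleftrightarrow> (\<exists>a. p = (\<lambda>x. \<Sum>k\<le>n. a k * x ^ k))"

definition dc :: "(nat \<times> nat) set \<Rightarrow> bool" where
  "dc S \<longleftrightarrow> (\<forall>i j i' j'. (i,j) \<in> S \<longrightarrow> i' \<le> i \<longrightarrow> j' \<le> j \<longrightarrow> (i',j') \<in> S)"

lemma pin_zero: "pin S (\<lambda>x y. 0)"
  unfolding pin_def by (rule exI[of _ "\<lambda>i j. 0"]) simp

lemma pin_add: "pin S f \<Longrightarrow> pin S g \<Longrightarrow> pin S (\<lambda>x y. f x y + g x y)"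
  unfolding pin_def
proof (elim exE)
  fix c d assume "f = (\<lambda>x y. \<Sum>(i,j)\<in>S. c i j * x ^ i * y ^ j)" "g = (\<lambda>x y. \<Sum>(i,j)\<in>S. d i j * x ^ i * y ^ j)"
  then show "\<exists>e. (\<lambda>x y. f x y + g x y) = (\<lambda>x y. \<Sum>(i,j)\<in>S. e i j * x ^ i * y ^ j)"
    by (intro exI[of _ "\<lambda>i j. c i j + d i j"]) (auto simp: sum.distrib[symmetric] case_prod_beta algebra_simps)
qed

lemma pin_scale: "pin S f \<Longrightarrow> pin S (\<lambda>x y. a * f x y)"
  unfolding pin_def
proof (elim exE)
  fix c assume "f = (\<lambda>x y. \<Sum>(i,j)\<in>S. c i j * x ^ i * y ^ j)"
  then show "\<exists>e. (\<lambda>x y. a * f x y) = (\<lambda>x y. \<Sum>(i,j)\<in>S. e i j * x ^ i * y ^ j)"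
    by (intro exI[of _ "\<lambda>i j. a * c i j"]) (auto simp: sum_distrib_left case_prod_beta algebra_simps)
qed

lemma pin_neg: "pin S f \<Longrightarrow> pin S (\<lambda>x y. - f x y)"
  using pin_scale[of S f "-1"] by simp

lemma pin_diff: "pin S f \<Longrightarrow> pin S g \<Longrightarrow> pin S (\<lambda>x y. f x y - g x y)"
  using pin_add[of S f "\<lambda>x y. - g x y"] pin_neg[of S g] by simp

lemma pin_sum: "finite I \<Longrightarrow> (\<And>k. k \<in> I \<Longrightarrow> pin S (F k)) \<Longrightarrow> pin S (\<lambda>x y. \<Sum>k\<in>I. F k x y)"
proof (induction I rule: finite_induct)
  case empty then show ?case by (simp add: pin_zero)
next
  case (insert a I)
  then show ?case using pin_add[of S "F a" "\<lambda>x y. \<Sum>k\<in>I. F k x y"] by simp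
qed

lemma pin_mono_aux: "pin S (\<lambda>x y. c * x ^ i * y ^ j)" if "(i,j) \<in> S" "finite S"
  unfolding pin_def
proof (rule exI[of _ "\<lambda>i' j'. if (i',j') = (i,j) then c else 0"], intro ext)
  fix x y :: complex
  have "(\<Sum>(i',j')\<in>S. (if (i',j') = (i,j) then c else 0) * x ^ i' * y ^ j') = (\<Sum>p\<in>S. if p = (i,j) then c * x^i*y^j else 0)"
    by (rule sum.cong[OF refl]) (auto split: if_splits)
  also have "\<dots> = c * x ^ i * y ^ j" using that by simp
  finally show "c * x ^ i * y ^ j = (\<Sum>(i',j')\<in>S. (if (i',j') = (i,j) then c else 0) * x ^ i' * y ^ j')" by simp
qed

lemma pin_mono: "pin S f \<Longrightarrow> S \<subseteq> T \<Longrightarrow> finite T \<Longrightarrow> pin T f"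
proof -
  assume "pin S f" "S \<subseteq> T" "finite T"
  then obtain c where f: "f = (\<lambda>x y. \<Sum>(i,j)\<in>S. c i j * x ^ i * y ^ j)" unfolding pin_def by blast
  have "finite S" using \<open>S \<subseteq> T\<close> \<open>finite T\<close> finite_subset by blast
  show "pin T f" unfolding f
    by (rule pin_sum[OF \<open>finite S\<close>]) (use \<open>S \<subseteq> T\<close> \<open>finite T\<close> in \<open>auto intro!: pin_mono_aux\<close>)
qed

lemma binom_shift: "(x + s) ^ i = (\<Sum>k\<le>i. of_nat (i choose k) * s ^ (i - k) * x ^ k)" for x s :: complex
  by (simp add: binomial_ring mult_ac)

lemma pin_shift:
  assumes "finite S" "dc S" "pin S f"
  shows "pin S (\<lambda>x y. f (x + s) (y + t))"
proof -
  obtain c where f: "f = (\<lambda>x y. \<Sum>(i,j)\<in>S. c i j * x ^ i * y ^ j)" using assms unfolding pin_def by blast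
  have eq: "(\<lambda>x y. f (x + s) (y + t)) = (\<lambda>x y. \<Sum>p\<in>S. \<Sum>k\<le>fst p. \<Sum>l\<le>snd p.
     (c (fst p) (snd p) * (of_nat (fst p choose k) * s ^ (fst p - k)) * (of_nat (snd p choose l) * t ^ (snd p - l))) * x ^ k * y ^ l)"
    unfolding f binom_shift
    by (intro ext sum.cong refl) (simp add: case_prod_beta sum_distrib_left sum_distrib_right sum_product mult_ac)
  show ?thesis unfolding eq
  proof (intro pin_sum)
    fix p k l assume "p \<in> S" "k \<in> {..fst p}" "l \<in> {..snd p}"
    then have "(k,l) \<in> S" using assms(2) unfolding dc_def by (cases p) auto
    then show "pin S (\<lambda>x y. (c (fst p) (snd p) * (of_nat (fst p choose k) * s ^ (fst p - k)) * (of_nat (snd p choose l) * t ^ (snd p - l))) * x ^ k * y ^ l)"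
      using assms(1) by (rule pin_mono_aux)
  qed (auto simp: assms)
qed

lemma pin_E1: "finite S \<Longrightarrow> dc S \<Longrightarrow> pin S f \<Longrightarrow> pin S (E1 f)"
  using pin_shift[of S f 1 0] by (simp add: E1_def)
lemma pin_E2: "finite S \<Longrightarrow> dc S \<Longrightarrow> pin S f \<Longrightarrow> pin S (E2 f)"
  using pin_shift[of S f 0 1] by (simp add: E2_def)
lemma pin_E1inv: "finite S \<Longrightarrow> dc S \<Longrightarrow> pin S f \<Longrightarrow> pin S (E1inv f)"
  using pin_shift[of S f "-1" 0] by (simp add: E1inv_def)
lemma pin_E2inv: "finite S \<Longrightarrow> dc S \<Longrightarrow> pin S f \<Longrightarrow> pin S (E2inv f)"
  using pin_shift[of S f 0 "-1"] by (simp add: E2inv_def)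

lemma pin_swap:
  assumes "pin S f" "finite S" "finite T" "\<And>i j. (i,j) \<in> S \<Longrightarrow> (j,i) \<in> T"
  shows "pin T (Swap f)"
proof -
  obtain c where f: "f = (\<lambda>x y. \<Sum>(i,j)\<in>S. c i j * x ^ i * y ^ j)" using assms unfolding pin_def by blast
  have eq: "Swap f = (\<lambda>x y. \<Sum>p\<in>S. c (fst p) (snd p) * x ^ snd p * y ^ fst p)"
    unfolding f Swap_def by (intro ext sum.cong refl) (simp add: case_prod_beta mult_ac)
  show ?thesis unfolding eq
    by (rule pin_sum[OF assms(2)]) (use assms in \<open>auto intro!: pin_mono_aux\<close>)
qed

lemma diff_pow: "(x + 1) ^ i - x ^ i = (\<Sum>k<i. of_nat (i choose k) * x ^ k)" for x :: complex
proof -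
  have "(x + 1) ^ i = (\<Sum>k<Suc i. of_nat (i choose k) * 1 ^ (i - k) * x ^ k)"
    unfolding lessThan_Suc_atMost by (rule binom_shift)
  then show ?thesis by simp
qed

lemma pin_D1:
  assumes "pin S f" "finite S" "finite T" "\<And>i j k. (i,j) \<in> S \<Longrightarrow> k < i \<Longrightarrow> (k,j) \<in> T"
  shows "pin T (D1 f)"
proof -
  obtain c where f: "f = (\<lambda>x y. \<Sum>(i,j)\<in>S. c i j * x ^ i * y ^ j)" using assms unfolding pin_def by blast
  have eq: "D1 f = (\<lambda>x y. \<Sum>p\<in>S. \<Sum>k<fst p. (c (fst p) (snd p) * of_nat (fst p choose k)) * x ^ k * y ^ snd p)"
  proof (intro ext)
    fix x y
    have "D1 f x y = (\<Sum>p\<in>S. c (fst p) (snd p) * ((x+1) ^ fst p - x ^ fst p) * y ^ snd p)"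
      unfolding f D1_def E1_def by (simp add: case_prod_beta sum_subtractf[symmetric] algebra_simps)
    also have "\<dots> = (\<Sum>p\<in>S. \<Sum>k<fst p. (c (fst p) (snd p) * of_nat (fst p choose k)) * x ^ k * y ^ snd p)"
      unfolding diff_pow by (simp add: sum_distrib_left sum_distrib_right mult_ac)
    finally show "D1 f x y = \<dots>" .
  qed
  show ?thesis unfolding eq
    by (intro pin_sum) (use assms in \<open>auto intro!: pin_mono_aux\<close>)
qed

lemma pin_D2:
  assumes "pin S f" "finite S" "finite T" "\<And>i j k. (i,j) \<in> S \<Longrightarrow> k < j \<Longrightarrow> (i,k) \<in> T"
  shows "pin T (D2 f)"
proof -
  obtain c where f: "f = (\<lambda>x y. \<Sum>(i,j)\<in>S. c i j * x ^ i * y ^ j)" using assms unfolding pin_def by blast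
  have eq: "D2 f = (\<lambda>x y. \<Sum>p\<in>S. \<Sum>k<snd p. (c (fst p) (snd p) * of_nat (snd p choose k)) * x ^ fst p * y ^ k)"
  proof (intro ext)
    fix x y
    have "D2 f x y = (\<Sum>p\<in>S. c (fst p) (snd p) * x ^ fst p * ((y+1) ^ snd p - y ^ snd p))"
      unfolding f D2_def E2_def by (simp add: case_prod_beta sum_subtractf[symmetric] algebra_simps)
    also have "\<dots> = (\<Sum>p\<in>S. \<Sum>k<snd p. (c (fst p) (snd p) * of_nat (snd p choose k)) * x ^ fst p * y ^ k)"
      unfolding diff_pow by (simp add: sum_distrib_left sum_distrib_right mult_ac)
    finally show "D2 f x y = \<dots>" .
  qed
  show ?thesis unfolding eq
    by (intro pin_sum) (use assms in \<open>auto intro!: pin_mono_aux\<close>)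
qed

definition Wop :: "fun2 \<Rightarrow> fun2" where "Wop f = (\<lambda>x y. V12 f x y + V21 f x y)"
definition Nop :: "fun2 \<Rightarrow> fun2" where "Nop f = (\<lambda>x y. E1inv (D1 (D2 f)) x y + E2inv (D2 (D1 f)) x y)"
definition low :: "(nat \<times> nat) set \<Rightarrow> (nat \<times> nat) set" where "low S = {(i,j). (Suc i, Suc j) \<in> S}"

lemma Wop_Nop: "Wop f = (\<lambda>x y. 2 * f x y + Nop f x y)"
  unfolding Wop_def Nop_def V12_def V21_def by (simp add: fun_eq_iff)

lemma Nop_lin: "Nop (\<lambda>x y. a * f x y + g x y) = (\<lambda>x y. a * Nop f x y + Nop g x y)"
  unfolding Nop_def E1inv_def E2inv_def D1_def D2_def E1_def E2_def by (simp add: fun_eq_iff algebra_simps)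

lemma low_sub: "dc S \<Longrightarrow> low S \<subseteq> S"
  unfolding dc_def low_def by auto

lemma low_dc: "dc S \<Longrightarrow> dc (low S)"
  unfolding dc_def low_def by auto

lemma low_finite: "finite S \<Longrightarrow> dc S \<Longrightarrow> finite (low S)"
  using low_sub finite_subset by blast

lemma low_card: assumes "finite S" "dc S" "S \<noteq> {}" shows "card (low S) < card S"
proof -
  define m where "m = Max (fst ` S)"
  have "m \<in> fst ` S" unfolding m_def using assms by (intro Max_in) auto
  then obtain j where mj: "(m,j) \<in> S" by force
  have "(m,j) \<notin> low S"
  proof
    assume "(m,j) \<in> low S"
    then have "(Suc m, Suc j) \<in> S" unfolding low_def by simp
    then have "Suc m \<le> m" unfolding m_def using assms(1) by (metis Max_ge finite_imageI fst_conv image_eqI)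
    then show False by simp
  qed
  then have "low S \<subset> S" using low_sub[OF assms(2)] mj by blast
  then show ?thesis using assms(1) by (simp add: psubset_card_mono)
qed

lemma pin_N: assumes "finite S" "dc S" "pin S f" shows "pin (low S) (Nop f)"
proof -
  let ?T2 = "{(i,j). (i, Suc j) \<in> S}"
  let ?T1 = "{(i,j). (Suc i, j) \<in> S}"
  have fT2: "finite ?T2"
    by (rule finite_subset[OF _ assms(1)]) (use assms(2) in \<open>auto simp: dc_def\<close>)
  have fT1: "finite ?T1"
    by (rule finite_subset[OF _ assms(1)]) (use assms(2) in \<open>auto simp: dc_def\<close>)
  have fl: "finite (low S)" using low_finite assms by blast
  have a: "pin ?T2 (D2 f)"
    by (rule pin_D2[OF assms(3,1) fT2]) (use assms(2) in \<open>auto simp: dc_def\<close>)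
  have b: "pin (low S) (D1 (D2 f))"
    by (rule pin_D1[OF a fT2 fl]) (use assms(2) in \<open>auto simp: dc_def low_def\<close>)
  have c: "pin ?T1 (D1 f)"
    by (rule pin_D1[OF assms(3,1) fT1]) (use assms(2) in \<open>auto simp: dc_def\<close>)
  have d: "pin (low S) (D2 (D1 f))"
    by (rule pin_D2[OF c fT1 fl]) (use assms(2) in \<open>auto simp: dc_def low_def\<close>)
  show ?thesis unfolding Nop_def
    by (rule pin_add; rule pin_E1inv pin_E2inv) (use fl low_dc[OF assms(2)] b d in auto)
qed

lemma pin_empty: "pin {} f \<Longrightarrow> f = (\<lambda>x y. 0)"
  unfolding pin_def by auto

lemma W_exists: "finite S \<Longrightarrow> dc S \<Longrightarrow> pin S h \<Longrightarrow> \<exists>g. pin S g \<and> Wop g = h"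
proof (induction "card S" arbitrary: S h rule: less_induct)
  case less
  show ?case
  proof (cases "S = {}")
    case True
    then have "h = (\<lambda>x y. 0)" using less pin_empty by blast
    then show ?thesis using True by (intro exI[of _ "\<lambda>x y. 0"])
      (simp add: pin_zero Wop_def V12_def V21_def E1inv_def E2inv_def D1_def D2_def E1_def E2_def)
  next
    case False
    have pn: "pin (low S) (\<lambda>x y. (-1/2) * Nop h x y)" using pin_scale pin_N less.prems by blast
    obtain g1 where g1: "pin (low S) g1" "Wop g1 = (\<lambda>x y. (-1/2) * Nop h x y)"
      using less.hyps[OF low_card[OF less.prems(1,2) False] low_finite[OF less.prems(1,2)] low_dc[OF less.prems(2)] pn]
      by blast
    have g1S: "pin S g1" using pin_mono[OF g1(1) low_sub[OF less.prems(2)] less.prems(1)] .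
    define g where "g = (\<lambda>x y. (1/2) * h x y + g1 x y)"
    have "pin S g" unfolding g_def using pin_add pin_scale less.prems(3) g1S by blast
    moreover have "Wop g = h"
    proof -
      have e: "\<And>x y. 2 * g1 x y + Nop g1 x y = (-1/2) * Nop h x y"
        using g1(2) unfolding Wop_Nop by (simp add: fun_eq_iff)
      show ?thesis unfolding g_def Wop_Nop Nop_lin
      proof (intro ext)
        fix x y
        have "2 * ((1/2) * h x y + g1 x y) + ((1/2) * Nop h x y + Nop g1 x y)
           = h x y + (2 * g1 x y + Nop g1 x y) + (1/2) * Nop h x y" by (simp add: algebra_simps)
        also have "\<dots> = h x y" unfolding e by simp
        finally show "2 * ((1/2) * h x y + g1 x y) + ((1/2) * Nop h x y + Nop g1 x y) = h x y" .
      qed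
    qed
    ultimately show ?thesis by blast
  qed
qed

lemma W_unique: "finite S \<Longrightarrow> dc S \<Longrightarrow> pin S g \<Longrightarrow> Wop g = (\<lambda>x y. 0) \<Longrightarrow> g = (\<lambda>x y. 0)"
proof (induction "card S" arbitrary: S g rule: less_induct)
  case less
  show ?case
  proof (cases "S = {}")
    case True
    then show ?thesis using less pin_empty by blast
  next
    case False
    have "g = (\<lambda>x y. (-1/2) * Nop g x y)"
    proof (intro ext)
      fix x y
      have "2 * g x y + Nop g x y = 0" using less.prems(4) unfolding Wop_Nop by (simp add: fun_eq_iff)
      then show "g x y = (-1/2) * Nop g x y" by (simp add: algebra_simps eq_neg_iff_add_eq_0[symmetric])
    qed
    moreover have "pin (low S) (\<lambda>x y. (-1/2) * Nop g x y)" using pin_scale pin_N less.prems by blast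
    ultimately have "pin (low S) g" by simp
    then show ?thesis
      using less.hyps[OF low_card[OF less.prems(1,2) False] low_finite[OF less.prems(1,2)] low_dc[OF less.prems(2)]] less.prems(4)
      by blast
  qed
qed

definition box :: "nat \<Rightarrow> (nat \<times> nat) set" where "box a = {..a} \<times> {..a}"
definition tri :: "nat \<Rightarrow> (nat \<times> nat) set" where "tri d = {(i,j). i + j \<le> d}"

lemma box_finite[simp]: "finite (box a)" unfolding box_def by simp
lemma box_dc[simp]: "dc (box a)" unfolding box_def dc_def by auto
lemma tri_sub_box: "tri d \<subseteq> box d" unfolding tri_def box_def by auto
lemma tri_finite[simp]: "finite (tri d)" using finite_subset[OF tri_sub_box] by simp
lemma tri_dc[simp]: "dc (tri d)" unfolding tri_def dc_def by auto
lemma box_mono: "a \<le> b \<Longrightarrow> box a \<subseteq> box b" unfolding box_def by auto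
lemma tri_mono: "a \<le> b \<Longrightarrow> tri a \<subseteq> tri b" unfolding tri_def by auto

lemma pin_box_iff: "pin (box n) f \<longleftrightarrow> (\<exists>c. f = (\<lambda>x y. \<Sum>i\<le>n. \<Sum>j\<le>n. c i j * x ^ i * y ^ j))"
  unfolding pin_def box_def by (simp add: sum.cartesian_product)

lemma poly2_pin: "poly2 f \<longleftrightarrow> (\<exists>n. pin (box n) f)"
  unfolding poly2_def pin_box_iff by blast

lemma deg_each_pin: "deg_each_le f n \<longleftrightarrow> pin (box n) f"
  unfolding deg_each_le_def pin_box_iff by blast

lemma total_deg_pin: "total_deg_le f n \<longleftrightarrow> pin (tri n) f"
  unfolding total_deg_le_def pin_def tri_def by blast

lemma upin_zero: "upin n (\<lambda>x. 0)"
  unfolding upin_def by (rule exI[of _ "\<lambda>k. 0"]) simp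

lemma upin_add: "upin n f \<Longrightarrow> upin n g \<Longrightarrow> upin n (\<lambda>x. f x + g x)"
  unfolding upin_def
proof (elim exE)
  fix c d assume "f = (\<lambda>x. \<Sum>k\<le>n. c k * x ^ k)" "g = (\<lambda>x. \<Sum>k\<le>n. d k * x ^ k)"
  then show "\<exists>e. (\<lambda>x. f x + g x) = (\<lambda>x. \<Sum>k\<le>n. e k * x ^ k)"
    by (intro exI[of _ "\<lambda>k. c k + d k"]) (auto simp: sum.distrib[symmetric] algebra_simps)
qed

lemma upin_scale: "upin n f \<Longrightarrow> upin n (\<lambda>x. a * f x)"
  unfolding upin_def
proof (elim exE)
  fix c assume "f = (\<lambda>x. \<Sum>k\<le>n. c k * x ^ k)"
  then show "\<exists>e. (\<lambda>x. a * f x) = (\<lambda>x. \<Sum>k\<le>n. e k * x ^ k)"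
    by (intro exI[of _ "\<lambda>k. a * c k"]) (auto simp: sum_distrib_left algebra_simps)
qed

lemma upin_diff: "upin n f \<Longrightarrow> upin n g \<Longrightarrow> upin n (\<lambda>x. f x - g x)"
  using upin_add[of n f "\<lambda>x. (-1) * g x"] upin_scale[of n g "-1"] by simp

lemma upin_sum: "finite I \<Longrightarrow> (\<And>k. k \<in> I \<Longrightarrow> upin n (F k)) \<Longrightarrow> upin n (\<lambda>x. \<Sum>k\<in>I. F k x)"
proof (induction I rule: finite_induct)
  case empty then show ?case by (simp add: upin_zero)
next
  case (insert a I)
  then show ?case using upin_add[of n "F a" "\<lambda>x. \<Sum>k\<in>I. F k x"] by simp
qed

lemma upin_mon: "k \<le> n \<Longrightarrow> upin n (\<lambda>x. c * x ^ k)"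
  unfolding upin_def
proof (rule exI[of _ "\<lambda>k'. if k' = k then c else 0"], intro ext)
  fix x :: complex assume "k \<le> n"
  have "(\<Sum>k'\<le>n. (if k' = k then c else 0) * x ^ k') = (\<Sum>k'\<le>n. if k' = k then c * x ^ k else 0)"
    by (rule sum.cong[OF refl]) auto
  also have "\<dots> = c * x ^ k" using \<open>k \<le> n\<close> by simp
  finally show "c * x ^ k = (\<Sum>k'\<le>n. (if k' = k then c else 0) * x ^ k')" by simp
qed

lemma upin_mono: "upin m f \<Longrightarrow> m \<le> n \<Longrightarrow> upin n f"
proof -
  assume "upin m f" "m \<le> n"
  then obtain c where f: "f = (\<lambda>x. \<Sum>k\<le>m. c k * x ^ k)" unfolding upin_def by blast
  show "upin n f" unfolding f by (rule upin_sum) (use \<open>m \<le> n\<close> in \<open>auto intro!: upin_mon\<close>)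
qed

lemma antidiff1: "\<exists>P. upin (Suc i) P \<and> (\<forall>x. P (x + 1) - P x = x ^ i)"
proof (induction i rule: less_induct)
  case (less i)
  then have "\<forall>k. k < i \<longrightarrow> (\<exists>P. upin (Suc k) P \<and> (\<forall>x. P (x + 1) - P x = x ^ k))" by blast
  then obtain Q where Q: "\<And>k. k < i \<Longrightarrow> upin (Suc k) (Q k) \<and> (\<forall>x. Q k (x + 1) - Q k x = x ^ k)"
    by metis
  define P where "P = (\<lambda>x. (1 / of_nat (Suc i)) * (x ^ Suc i - (\<Sum>k<i. of_nat (Suc i choose k) * Q k x)))"
  have "upin (Suc i) P" unfolding P_def
  proof (intro upin_scale upin_diff upin_sum)
    show "upin (Suc i) (\<lambda>x. x ^ Suc i)" using upin_mon[of "Suc i" "Suc i" 1] by simp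
  next
    fix k assume "k \<in> {..<i}"
    then show "upin (Suc i) (Q k)"
      using Q[of k] by (auto elim!: upin_mono)
  qed auto
  moreover have "P (x + 1) - P x = x ^ i" for x
  proof -
    have s: "(\<Sum>k<i. of_nat (Suc i choose k) * Q k (x+1)) - (\<Sum>k<i. of_nat (Suc i choose k) * Q k x) = (\<Sum>k<i. of_nat (Suc i choose k) * (Q k (x+1) - Q k x))"
      by (simp add: sum_subtractf[symmetric] right_diff_distrib)
    have "P (x + 1) - P x = (1 / of_nat (Suc i)) * (((x+1) ^ Suc i - x ^ Suc i) - ((\<Sum>k<i. of_nat (Suc i choose k) * Q k (x+1)) - (\<Sum>k<i. of_nat (Suc i choose k) * Q k x)))"
      unfolding P_def by (simp only: right_diff_distrib) simp
    also have "\<dots> = (1 / of_nat (Suc i)) * (((x+1) ^ Suc i - x ^ Suc i) - (\<Sum>k<i. of_nat (Suc i choose k) * (Q k (x+1) - Q k x)))"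
      unfolding s ..
    also have "(\<Sum>k<i. of_nat (Suc i choose k) * (Q k (x+1) - Q k x)) = (\<Sum>k<i. of_nat (Suc i choose k) * x ^ k)"
      using Q by (intro sum.cong) auto
    also have "(x+1) ^ Suc i - x ^ Suc i = (\<Sum>k<i. of_nat (Suc i choose k) * x ^ k) + of_nat (Suc i) * x ^ i"
      unfolding diff_pow by simp
    moreover have nz: "1 + of_nat i \<noteq> (0::complex)"
      using of_nat_neq_0[of i, where 'a=complex] by simp
    ultimately show ?thesis by simp
  qed
  ultimately show ?case by blast
qed

lemma pin_prod:
  assumes "upin m p" "upin n q" "finite T" "\<And>k l. k \<le> m \<Longrightarrow> l \<le> n \<Longrightarrow> (k,l) \<in> T"
  shows "pin T (\<lambda>x y. c * p x * q y)"
proof -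
  obtain a where p: "p = (\<lambda>x. \<Sum>k\<le>m. a k * x ^ k)" using assms unfolding upin_def by blast
  obtain b where q: "q = (\<lambda>x. \<Sum>k\<le>n. b k * x ^ k)" using assms unfolding upin_def by blast
  have eq: "(\<lambda>x y. c * p x * q y) = (\<lambda>x y. \<Sum>k\<le>m. \<Sum>l\<le>n. (c * a k * b l) * x ^ k * y ^ l)"
    unfolding p q by (simp add: sum_distrib_left sum_distrib_right sum_product mult_ac)
  show ?thesis unfolding eq
    by (intro pin_sum) (use assms in \<open>auto intro!: pin_mono_aux\<close>)
qed

lemma antidiff2:
  assumes "finite S" "pin S f" "finite T" "dc T" "\<And>i j. (i,j) \<in> S \<Longrightarrow> (Suc i, Suc j) \<in> T"
  shows "\<exists>F. pin T F \<and> D1 (D2 F) = f"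
proof -
  obtain c where f: "f = (\<lambda>x y. \<Sum>(i,j)\<in>S. c i j * x ^ i * y ^ j)" using assms unfolding pin_def by blast
  obtain P where P: "\<And>i. upin (Suc i) (P i)" "\<And>i x. P i (x + 1) - P i x = x ^ i"
    using antidiff1 by metis
  define F where "F = (\<lambda>x y. \<Sum>p\<in>S. c (fst p) (snd p) * P (fst p) x * P (snd p) y)"
  have "pin T F" unfolding F_def
  proof (intro pin_sum[OF assms(1)])
    fix p assume "p \<in> S"
    then have "(Suc (fst p), Suc (snd p)) \<in> T" using assms(5)[of "fst p" "snd p"] by simp
    then show "pin T (\<lambda>x y. c (fst p) (snd p) * P (fst p) x * P (snd p) y)"
      using assms(4) by (intro pin_prod[OF P(1) P(1) assms(3)]) (auto simp: dc_def)
  qed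
  moreover have "D1 (D2 F) = f"
  proof (intro ext)
    fix x y
    have "D1 (D2 F) x y = (\<Sum>p\<in>S. c (fst p) (snd p) * (P (fst p) (x+1) - P (fst p) x) * (P (snd p) (y+1) - P (snd p) y))"
      unfolding F_def D1_def D2_def E1_def E2_def
      by (simp add: sum_subtractf[symmetric] algebra_simps)
    also have "\<dots> = f x y" unfolding P(2) f by (simp add: case_prod_beta)
    finally show "D1 (D2 F) x y = f x y" .
  qed
  ultimately show ?thesis by blast
qed

lemma periodic_const:
  assumes "upin n p" "\<And>t. p (t + 1) = p t"
  shows "p t = p 0"
proof -
  obtain a where p: "p = (\<lambda>x. \<Sum>k\<le>n. a k * x ^ k)" using assms unfolding upin_def by blast
  have nat: "p (of_nat m) = p 0" for m
  proof (induction m)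
    case (Suc m)
    have "p (of_nat (Suc m)) = p (of_nat m + 1)" by (simp add: add.commute)
    then show ?case using assms(2) Suc by simp
  qed simp
  define b where "b k = (if k = 0 then a 0 - p 0 else a k)" for k
  have bq: "(\<Sum>k\<le>n. b k * x ^ k) = p x - p 0" for x
  proof -
    have "(\<Sum>k\<le>n. b k * x ^ k) = (\<Sum>k\<le>n. a k * x ^ k - (if k = 0 then p 0 else 0))"
      unfolding b_def by (intro sum.cong) (auto simp: algebra_simps)
    also have "\<dots> = p x - p 0" unfolding sum_subtractf by (simp add: p)
    finally show ?thesis .
  qed
  have "range (of_nat :: nat \<Rightarrow> complex) \<subseteq> {x. (\<Sum>k\<le>n. b k * x ^ k) = 0}"
    using nat bq by auto
  moreover have "\<not> finite (range (of_nat :: nat \<Rightarrow> complex))"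
    by (metis finite_imageD infinite_UNIV_char_0 inj_on_of_nat)
  ultimately have "\<not> finite {x. (\<Sum>k\<le>n. b k * x ^ k) = 0}" using finite_subset by blast
  then have "\<forall>i\<le>n. b i = 0" using polyfun_finite_roots by blast
  then have "(\<Sum>k\<le>n. b k * t ^ k) = 0" by simp
  then show ?thesis using bq by simp
qed

lemma restr1:
  assumes "pin S f" "finite S" "\<And>i j. (i,j) \<in> S \<Longrightarrow> i \<le> n"
  shows "upin n (\<lambda>x. f x t)"
proof -
  obtain c where f: "f = (\<lambda>x y. \<Sum>(i,j)\<in>S. c i j * x ^ i * y ^ j)" using assms unfolding pin_def by blast
  have eq: "(\<lambda>x. f x t) = (\<lambda>x. \<Sum>p\<in>S. (c (fst p) (snd p) * t ^ snd p) * x ^ fst p)"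
    unfolding f by (intro ext sum.cong refl) (simp add: case_prod_beta mult_ac)
  show ?thesis unfolding eq by (intro upin_sum) (use assms in \<open>auto intro!: upin_mon\<close>)
qed

lemma restr2:
  assumes "pin S f" "finite S" "\<And>i j. (i,j) \<in> S \<Longrightarrow> j \<le> n"
  shows "upin n (\<lambda>y. f t y)"
proof -
  obtain c where f: "f = (\<lambda>x y. \<Sum>(i,j)\<in>S. c i j * x ^ i * y ^ j)" using assms unfolding pin_def by blast
  have eq: "(\<lambda>y. f t y) = (\<lambda>y. \<Sum>p\<in>S. (c (fst p) (snd p) * t ^ fst p) * y ^ snd p)"
    unfolding f by (intro ext sum.cong refl) (simp add: case_prod_beta mult_ac)
  show ?thesis unfolding eq by (intro upin_sum) (use assms in \<open>auto intro!: upin_mon\<close>)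
qed

lemma restr_diag:
  assumes "pin S f" "finite S" "\<And>i j. (i,j) \<in> S \<Longrightarrow> i + j \<le> n"
  shows "upin n (\<lambda>x. f x x)"
proof -
  obtain c where f: "f = (\<lambda>x y. \<Sum>(i,j)\<in>S. c i j * x ^ i * y ^ j)" using assms unfolding pin_def by blast
  have eq: "(\<lambda>x. f x x) = (\<lambda>x. \<Sum>p\<in>S. c (fst p) (snd p) * x ^ (fst p + snd p))"
    unfolding f by (intro ext sum.cong refl) (simp add: case_prod_beta mult_ac power_add)
  show ?thesis unfolding eq by (intro upin_sum) (use assms in \<open>auto intro!: upin_mon\<close>)
qed

lemma D_comm: "D2 (D1 f) = D1 (D2 f)"
  unfolding D1_def D2_def E1_def E2_def by (simp add: fun_eq_iff algebra_simps)

lemma kernel: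
  assumes "pin (box a) z" "D1 (D2 z) = (\<lambda>x y. 0)"
  shows "z x y = z x 0 + z 0 y - z 0 0"
proof -
  have bx: "\<And>i j. (i,j) \<in> box a \<Longrightarrow> i \<le> a" "\<And>i j. (i,j) \<in> box a \<Longrightarrow> j \<le> a" unfolding box_def by auto
  have pD1: "pin (box a) (D1 z)" unfolding D1_def
    using pin_diff[OF pin_E1[OF box_finite box_dc assms(1)] assms(1)] .
  have c1: "D1 z u t = D1 z u 0" for u t
  proof (rule periodic_const[of a "\<lambda>t. D1 z u t"])
    show "upin a (\<lambda>t. D1 z u t)" by (rule restr2[OF pD1 box_finite bx(2)])
    fix t
    have "D2 (D1 z) u t = 0" using assms(2) D_comm by metis
    then show "D1 z u (t + 1) = D1 z u t" unfolding D2_def E2_def by simp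
  qed
  have "z x y - z x 0 = z 0 y - z 0 0"
  proof (rule periodic_const[of a "\<lambda>x. z x y - z x 0", simplified])
    show "upin a (\<lambda>x. z x y - z x 0)"
      by (intro upin_diff restr1[OF assms(1) box_finite bx(1)])
    fix t
    have "D1 z t y = D1 z t 0" by (rule c1)
    then show "z (t + 1) y - z (t + 1) 0 = z t y - z t 0" unfolding D1_def E1_def by (simp add: algebra_simps)
  qed
  then show ?thesis by (simp add: algebra_simps)
qed

lemma sum_tele_int:
  fixes F f :: "int \<Rightarrow> complex"
  assumes h: "\<forall>i. F (i + 1) - F i = f i"
  shows "a - 1 \<le> b \<Longrightarrow> (\<Sum>i=a..b. f i) = F (b + 1) - F a"
proof (induction b rule: int_ge_induct)
  case base then show ?case by simp
next
  case (step i)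
  have "{a..1 + i} = insert (1 + i) {a..i}" using step by (intro atLeastAtMostPlus1_int_conv) simp
  then have "(\<Sum>k=a..i + 1. f k) = f (i + 1) + (\<Sum>k=a..i. f k)" by (simp add: add.commute)
  also have "\<dots> = f (i + 1) + (F (i + 1) - F a)" using step by simp
  also have "f (i + 1) = F (i + 1 + 1) - F (i + 1)" using h[rule_format, of "i + 1"] by simp
  finally show ?case by simp
qed

lemma isum_tele: "(\<forall>i. F (i + 1) - F i = f i) \<Longrightarrow> isum f a b = F (b + 1) - F a"
  for F f :: "int \<Rightarrow> complex"
proof (cases "a \<le> b")
  case True
  assume h: "\<forall>i. F (i + 1) - F i = f i"
  then show ?thesis using True sum_tele_int[of F f a b] by (simp add: isum_def)
next
  case False
  assume h: "\<forall>i. F (i + 1) - F i = f i"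
  have "(\<Sum>i=b+1..a-1. f i) = F (a - 1 + 1) - F (b + 1)" using False by (intro sum_tele_int[OF h]) simp
  then show ?thesis using False by (simp add: isum_def)
qed

definition q3 :: "nat \<Rightarrow> nat \<Rightarrow> (int \<Rightarrow> int \<Rightarrow> int \<Rightarrow> complex) \<Rightarrow> bool" where
  "q3 N d P \<longleftrightarrow> (\<exists>c. P = (\<lambda>k1 k2 k3. \<Sum>a\<le>N. \<Sum>b\<le>d. \<Sum>e\<le>N.
         c a b e * of_int k1 ^ a * of_int k2 ^ b * of_int k3 ^ e))"

lemma q3_poly3: "q3 N d P \<Longrightarrow> poly3_deg2_le P d"
  unfolding q3_def poly3_deg2_le_def by auto

lemma q3_zero: "q3 N d (\<lambda>k1 k2 k3. 0)"
  unfolding q3_def by (rule exI[of _ "\<lambda>a b e. 0"]) simp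

lemma q3_add: "q3 N d P \<Longrightarrow> q3 N d Q \<Longrightarrow> q3 N d (\<lambda>k1 k2 k3. P k1 k2 k3 + Q k1 k2 k3)"
  unfolding q3_def
proof (elim exE)
  fix c c' assume "P = (\<lambda>k1 k2 k3. \<Sum>a\<le>N. \<Sum>b\<le>d. \<Sum>e\<le>N. c a b e * of_int k1 ^ a * of_int k2 ^ b * of_int k3 ^ e)"
    "Q = (\<lambda>k1 k2 k3. \<Sum>a\<le>N. \<Sum>b\<le>d. \<Sum>e\<le>N. c' a b e * of_int k1 ^ a * of_int k2 ^ b * of_int k3 ^ e)"
  then show "\<exists>c''. (\<lambda>k1 k2 k3. P k1 k2 k3 + Q k1 k2 k3) = (\<lambda>k1 k2 k3. \<Sum>a\<le>N. \<Sum>b\<le>d. \<Sum>e\<le>N. c'' a b e * of_int k1 ^ a * of_int k2 ^ b * of_int k3 ^ e)"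
    by (intro exI[of _ "\<lambda>a b e. c a b e + c' a b e"]) (auto simp: sum.distrib[symmetric] algebra_simps)
qed

lemma q3_scale: "q3 N d P \<Longrightarrow> q3 N d (\<lambda>k1 k2 k3. s * P k1 k2 k3)"
  unfolding q3_def
proof (elim exE)
  fix c assume "P = (\<lambda>k1 k2 k3. \<Sum>a\<le>N. \<Sum>b\<le>d. \<Sum>e\<le>N. c a b e * of_int k1 ^ a * of_int k2 ^ b * of_int k3 ^ e)"
  then show "\<exists>c''. (\<lambda>k1 k2 k3. s * P k1 k2 k3) = (\<lambda>k1 k2 k3. \<Sum>a\<le>N. \<Sum>b\<le>d. \<Sum>e\<le>N. c'' a b e * of_int k1 ^ a * of_int k2 ^ b * of_int k3 ^ e)"
    by (intro exI[of _ "\<lambda>a b e. s * c a b e"]) (auto simp: sum_distrib_left algebra_simps)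
qed

lemma q3_diff: "q3 N d P \<Longrightarrow> q3 N d Q \<Longrightarrow> q3 N d (\<lambda>k1 k2 k3. P k1 k2 k3 - Q k1 k2 k3)"
  using q3_add[of N d P "\<lambda>k1 k2 k3. (-1) * Q k1 k2 k3"] q3_scale[of N d Q "-1"] by simp

lemma q3_sum: "finite I \<Longrightarrow> (\<And>k. k \<in> I \<Longrightarrow> q3 N d (F k)) \<Longrightarrow> q3 N d (\<lambda>k1 k2 k3. \<Sum>k\<in>I. F k k1 k2 k3)"
proof (induction I rule: finite_induct)
  case empty then show ?case by (simp add: q3_zero)
next
  case (insert a I)
  then show ?case using q3_add[of N d "F a" "\<lambda>k1 k2 k3. \<Sum>k\<in>I. F k k1 k2 k3"] by simp
qed

lemma q3_prod:
  assumes "upin N p1" "upin d p2" "upin N p3"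
  shows "q3 N d (\<lambda>k1 k2 k3. p1 (of_int k1) * p2 (of_int k2) * p3 (of_int k3))"
proof -
  obtain a1 where p1: "p1 = (\<lambda>x. \<Sum>k\<le>N. a1 k * x ^ k)" using assms unfolding upin_def by blast
  obtain a2 where p2: "p2 = (\<lambda>x. \<Sum>k\<le>d. a2 k * x ^ k)" using assms unfolding upin_def by blast
  obtain a3 where p3: "p3 = (\<lambda>x. \<Sum>k\<le>N. a3 k * x ^ k)" using assms unfolding upin_def by blast
  show ?thesis unfolding q3_def p1 p2 p3
    apply (rule exI[of _ "\<lambda>a b e. a1 a * a2 b * a3 e"])
    apply (simp add: sum_distrib_left sum_distrib_right sum_product mult_ac)
    apply (intro ext)
    apply (rule sum.swap)
    done
qed

lemma upin_one: "upin N (\<lambda>x. 1)"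
  using upin_mon[of 0 N 1] by simp

lemma q3_23:
  assumes "pin S f" "finite S" "\<And>i j. (i,j) \<in> S \<Longrightarrow> i \<le> d \<and> j \<le> N"
  shows "q3 N d (\<lambda>k1 k2 k3. f (of_int k2) (of_int k3))"
proof -
  obtain c where f: "f = (\<lambda>x y. \<Sum>(i,j)\<in>S. c i j * x ^ i * y ^ j)" using assms unfolding pin_def by blast
  have eq: "(\<lambda>k1 k2 k3. f (of_int k2) (of_int k3)) = (\<lambda>k1 k2 k3. \<Sum>p\<in>S. (\<lambda>x. 1) (of_int k1 :: complex) * (\<lambda>x. c (fst p) (snd p) * x ^ fst p) (of_int k2) * (\<lambda>x. 1 * x ^ snd p) (of_int k3))"
    unfolding f by (simp add: case_prod_beta)
  show ?thesis unfolding eq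
    by (intro q3_sum q3_prod upin_one upin_mon assms(2)) (use assms(3) in force)+
qed

lemma q3_13:
  assumes "pin S f" "finite S" "\<And>i j. (i,j) \<in> S \<Longrightarrow> i \<le> N \<and> j \<le> N"
  shows "q3 N d (\<lambda>k1 k2 k3. f (of_int k1) (of_int k3))"
proof -
  obtain c where f: "f = (\<lambda>x y. \<Sum>(i,j)\<in>S. c i j * x ^ i * y ^ j)" using assms unfolding pin_def by blast
  have eq: "(\<lambda>k1 k2 k3. f (of_int k1) (of_int k3)) = (\<lambda>k1 k2 k3. \<Sum>p\<in>S. (\<lambda>x. c (fst p) (snd p) * x ^ fst p) (of_int k1 :: complex) * (\<lambda>x. 1) (of_int k2) * (\<lambda>x. 1 * x ^ snd p) (of_int k3))"
    unfolding f by (simp add: case_prod_beta)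
  show ?thesis unfolding eq
    by (intro q3_sum q3_prod upin_one upin_mon assms(2)) (use assms(3) in force)+
qed

lemma q3_12:
  assumes "pin S f" "finite S" "\<And>i j. (i,j) \<in> S \<Longrightarrow> i \<le> N \<and> j \<le> d"
  shows "q3 N d (\<lambda>k1 k2 k3. f (of_int k1) (of_int k2))"
proof -
  obtain c where f: "f = (\<lambda>x y. \<Sum>(i,j)\<in>S. c i j * x ^ i * y ^ j)" using assms unfolding pin_def by blast
  have eq: "(\<lambda>k1 k2 k3. f (of_int k1) (of_int k2)) = (\<lambda>k1 k2 k3. \<Sum>p\<in>S. (\<lambda>x. c (fst p) (snd p) * x ^ fst p) (of_int k1 :: complex) * (\<lambda>x. 1 * x ^ snd p) (of_int k2) * (\<lambda>x. 1) (of_int k3))"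
    unfolding f by (simp add: case_prod_beta)
  show ?thesis unfolding eq
    by (intro q3_sum q3_prod upin_one upin_mon assms(2)) (use assms(3) in force)+
qed

lemma q3_2:
  assumes "upin d p"
  shows "q3 N d (\<lambda>k1 k2 k3. p (of_int k2))"
  using q3_prod[OF upin_one assms upin_one] by simp

definition sig :: "fun2 \<Rightarrow> fun2" where "sig f = E2 (E1inv (Swap f))"

lemmas alldefs = Wop_def V12_def V21_def E1inv_def E2inv_def D1_def D2_def E1_def E2_def sig_def Swap_def

lemma I1: "Wop (D1 (D2 f)) = D1 (D2 (Wop f))"
  unfolding alldefs by (simp add: fun_eq_iff algebra_simps)
lemma I2: "D1 (D2 (V12 f)) = V12 (D1 (D2 f))"
  unfolding alldefs by (simp add: fun_eq_iff algebra_simps)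
lemma I3: "Wop (\<lambda>x y. f x y - h x y) = (\<lambda>x y. Wop f x y - Wop h x y)"
  unfolding alldefs by (simp add: fun_eq_iff algebra_simps)
lemma I4: "D1 (D2 (\<lambda>x y. f x y + sig f x y)) = (\<lambda>x y. D1 (D2 f) x y + sig (D1 (D2 f)) x y)"
  unfolding alldefs by (simp add: fun_eq_iff algebra_simps)
lemma I5: "Wop (\<lambda>x y. f x y + sig f x y) = (\<lambda>x y. Wop f x y + sig (Wop f) x y)"
  unfolding alldefs by (simp add: fun_eq_iff algebra_simps)
lemma I6: "Wop f x y = 2 * f x y + D1 (D2 f) (x - 1) y + D2 (D1 f) x (y - 1)"
  unfolding alldefs by (simp add: algebra_simps)
lemma I7: "D1 (D2 (\<lambda>x y. f x y - h x y)) = (\<lambda>x y. D1 (D2 f) x y - D1 (D2 h) x y)"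
  unfolding alldefs by (simp add: fun_eq_iff algebra_simps)
lemma I8: "sig f (x + 1) x = f (x + 1) x"
  unfolding alldefs by simp
lemma I9: "V12 f (x + 1) x = f (x + 1) x + D1 (D2 f) x x"
  unfolding alldefs by simp
lemma I10: "D1 (D2 (\<lambda>x y. 0)) = (\<lambda>x y. 0)"
  unfolding alldefs by simp
lemma Top_sig: "Top A = (\<lambda>x y. Vsum_inv (V12 A) x y + sig (Vsum_inv (V12 A)) x y)"
  unfolding Top_def sig_def Let_def ..

lemma pin_sig: "pin (box m) f \<Longrightarrow> pin (box m) (sig f)"
  unfolding sig_def
  by (intro pin_E2 pin_E1inv box_finite box_dc pin_swap[of "box m"]) (auto simp: box_def)

lemma pin_D12_box: "pin (box m) f \<Longrightarrow> pin (box m) (D1 (D2 f))"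
  by (rule pin_D1[of "box m"], rule pin_D2[of "box m"]) (auto simp: box_def)

lemma line_w:
  assumes "pin (box m) w" "pin (tri m) w0" "D1 (D2 w0) = D1 (D2 w)"
  shows "upin m (\<lambda>k. w (k + 1) k)"
proof -
  define z where "z = (\<lambda>x y. w x y - w0 x y)"
  have pz: "pin (box m) z" unfolding z_def
    using pin_diff[OF assms(1) pin_mono[OF assms(2) tri_sub_box box_finite]] .
  have "D1 (D2 z) = (\<lambda>x y. 0)" unfolding z_def I7 assms(3) by simp
  then have zk: "z x y = z x 0 + z 0 y - z 0 0" for x y using kernel[OF pz] by blast
  have eq: "(\<lambda>k. w (k + 1) k) = (\<lambda>k. (E1 w0 k k + E1 z k 0) + (z 0 k - z 0 0 * k ^ 0))"
  proof (rule ext)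
    fix k
    have "w (k + 1) k = w0 (k + 1) k + z (k + 1) k" by (simp add: z_def)
    also have "z (k + 1) k = z (k + 1) 0 + z 0 k - z 0 0" by (rule zk)
    finally show "w (k + 1) k = (E1 w0 k k + E1 z k 0) + (z 0 k - z 0 0 * k ^ 0)"
      by (simp add: E1_def)
  qed
  have bx: "\<And>i j. (i,j) \<in> box m \<Longrightarrow> i \<le> m" "\<And>i j. (i,j) \<in> box m \<Longrightarrow> j \<le> m" unfolding box_def by auto
  show ?thesis unfolding eq
  proof (intro upin_add upin_diff upin_mon)
    show "upin m (\<lambda>k. E1 w0 k k)"
      by (rule restr_diag[OF pin_E1[OF tri_finite tri_dc assms(2)] tri_finite]) (auto simp: tri_def)
    show "upin m (\<lambda>k. E1 z k 0)" by (rule restr1[OF pin_E1[OF box_finite box_dc pz] box_finite bx(1)])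
    show "upin m (\<lambda>k. z 0 k)" by (rule restr2[OF pz box_finite bx(2)])
  qed simp
qed

theorem lemma2:
  fixes A :: fun2 and R :: nat
  assumes "deg_each_le A R"
    and "total_deg_le (Top A) R"
  shows "poly3_deg2_le
           (\<lambda>k1 k2 k3. isum (\<lambda>l1. isum (\<lambda>l2. A (of_int l1) (of_int l2)) k2 k3) k1 k2
                        - A (of_int k2) (of_int k2)) (R + 2)
       \<and> (Top A = (\<lambda>x y. 0) \<longrightarrow> poly3_deg2_le
           (\<lambda>k1 k2 k3. isum (\<lambda>l1. isum (\<lambda>l2. A (of_int l1) (of_int l2)) k2 k3) k1 k2
                        - A (of_int k2) (of_int k2)) (R + 1))"
proof -
  have pA: "pin (box R) A" using assms(1) deg_each_pin by blast
  obtain \<Phi> where p\<Phi>: "pin (box (Suc R)) \<Phi>" and d\<Phi>: "D1 (D2 \<Phi>) = A"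
    using antidiff2[OF box_finite pA box_finite box_dc] by (auto simp: box_def)
  define u where "u = V12 \<Phi>"
  have pu: "pin (box (Suc R)) u" unfolding u_def V12_def
    using pin_add[OF p\<Phi> pin_E1inv[OF box_finite box_dc pin_D12_box[OF p\<Phi>]]] .
  obtain \<psi> where p\<psi>: "pin (box (Suc R)) \<psi>" and w\<psi>: "Wop \<psi> = u"
    using W_exists[OF box_finite box_dc pu] by blast
  define g where "g = D1 (D2 \<psi>)"
  have pg: "pin (box (Suc R)) g" unfolding g_def by (rule pin_D12_box[OF p\<psi>])
  have wg: "Wop g = V12 A" unfolding g_def I1 w\<psi> u_def I2 d\<Phi> ..
  have vs: "Vsum_inv (V12 A) = g"
    unfolding Vsum_inv_def
  proof (rule the_equality)
    show "poly2 g \<and> (\<lambda>x y. V12 g x y + V21 g x y) = V12 A"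
      using pg wg unfolding poly2_pin Wop_def by blast
  next
    fix g' assume h: "poly2 g' \<and> (\<lambda>x y. V12 g' x y + V21 g' x y) = V12 A"
    then obtain n where pg': "pin (box n) g'" unfolding poly2_pin by blast
    define M where "M = max n (Suc R)"
    have "pin (box M) (\<lambda>x y. g' x y - g x y)" unfolding M_def
      by (intro pin_diff pin_mono[OF pg'] pin_mono[OF pg] box_mono box_finite) auto
    moreover have "Wop (\<lambda>x y. g' x y - g x y) = (\<lambda>x y. 0)"
      unfolding I3 wg using h unfolding Wop_def[symmetric] by simp
    ultimately have "(\<lambda>x y. g' x y - g x y) = (\<lambda>x y. 0)" using W_unique box_finite box_dc by blast
    then show "g' = g" by (simp add: fun_eq_iff)
  qed
  define w where "w = (\<lambda>x y. \<psi> x y + sig \<psi> x y)"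
  have pw: "pin (box (Suc R)) w" unfolding w_def by (rule pin_add[OF p\<psi> pin_sig[OF p\<psi>]])
  have TA: "Top A = D1 (D2 w)" unfolding Top_sig vs w_def I4 g_def ..
  have Ww: "Wop w = (\<lambda>x y. u x y + sig u x y)" unfolding w_def I5 w\<psi> ..
  have uline: "u (k + 1) k = w (k + 1) k + (1/2) * (Top A k k + Top A (k + 1) (k - 1))" for k
  proof -
    have "Wop w (k + 1) k = 2 * u (k + 1) k" by (simp add: Ww I8)
    moreover have "Wop w (k + 1) k = 2 * w (k + 1) k + Top A k k + Top A (k + 1) (k - 1)"
      unfolding I6 TA D_comm by simp
    ultimately show ?thesis by (simp add: field_simps)
  qed
  have pT: "pin (tri R) (Top A)" using assms(2) total_deg_pin by blast
  have Tline: "upin R (\<lambda>k. (1/2) * (Top A k k + Top A (k + 1) (k - 1)))"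
  proof (intro upin_scale upin_add)
    show "upin R (\<lambda>k. Top A k k)" by (rule restr_diag[OF pT tri_finite]) (auto simp: tri_def)
    have "(\<lambda>k. Top A (k + 1) (k - 1)) = (\<lambda>k. E1 (E2inv (Top A)) k k)" by (simp add: E1_def E2inv_def)
    moreover have "upin R (\<lambda>k. E1 (E2inv (Top A)) k k)"
      by (rule restr_diag[OF pin_E1[OF tri_finite tri_dc pin_E2inv[OF tri_finite tri_dc pT]] tri_finite])
        (auto simp: tri_def)
    ultimately show "upin R (\<lambda>k. Top A (k + 1) (k - 1))" by simp
  qed
  have key: "upin d (\<lambda>k. u (k + 1) k)" if "R + 1 \<le> d" "upin d (\<lambda>k. w (k + 1) k)" for d
  proof -
    have "(\<lambda>k. u (k + 1) k) = (\<lambda>k. w (k + 1) k + (1/2) * (Top A k k + Top A (k + 1) (k - 1)))"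
      using uline by auto
    then show ?thesis using upin_add[OF that(2) upin_mono[OF Tline]] that(1) by simp
  qed
  have inner: "isum (\<lambda>l2. A (of_int l1) (of_int l2)) k2 k3
     = D1 \<Phi> (of_int l1) (of_int (k3 + 1)) - D1 \<Phi> (of_int l1) (of_int k2)" for l1 k2 k3
  proof (rule isum_tele)
    have hA: "A x y = D1 \<Phi> x (y + 1) - D1 \<Phi> x y" for x y
    proof -
      have A2: "D2 (D1 \<Phi>) = A" using d\<Phi> by (simp add: D_comm)
      show ?thesis unfolding A2[symmetric] D2_def E2_def by simp
    qed
    show "\<forall>i. D1 \<Phi> (of_int l1) (of_int (i + 1)) - D1 \<Phi> (of_int l1) (of_int i) = A (of_int l1) (of_int i)"
      by (simp add: hA)
  qed
  have outer: "isum (\<lambda>l1. D1 \<Phi> (of_int l1) (of_int (k3 + 1)) - D1 \<Phi> (of_int l1) (of_int k2)) k1 k2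
     = (\<Phi> (of_int (k2 + 1)) (of_int (k3 + 1)) - \<Phi> (of_int (k2 + 1)) (of_int k2))
       - (\<Phi> (of_int k1) (of_int (k3 + 1)) - \<Phi> (of_int k1) (of_int k2))" for k1 k2 k3
    by (rule isum_tele) (simp add: D1_def E1_def)
  have Pform: "(\<lambda>k1 k2 k3. isum (\<lambda>l1. isum (\<lambda>l2. A (of_int l1) (of_int l2)) k2 k3) k1 k2
                        - A (of_int k2) (of_int k2))
     = (\<lambda>k1 k2 k3. E1 (E2 \<Phi>) (of_int k2) (of_int k3) - E2 \<Phi> (of_int k1) (of_int k3)
          + \<Phi> (of_int k1) (of_int k2) - u (of_int k2 + 1) (of_int k2))"
    unfolding inner outer u_def I9 d\<Phi> by (simp add: fun_eq_iff E1_def E2_def)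
  have final: "poly3_deg2_le (\<lambda>k1 k2 k3. isum (\<lambda>l1. isum (\<lambda>l2. A (of_int l1) (of_int l2)) k2 k3) k1 k2
                        - A (of_int k2) (of_int k2)) d"
    if d: "R + 1 \<le> d" "upin d (\<lambda>k. u (k + 1) k)" for d
  proof -
    have bx: "\<And>i j. (i,j) \<in> box (Suc R) \<Longrightarrow> i \<le> Suc R \<and> j \<le> Suc R" unfolding box_def by auto
    have pEE: "pin (box (Suc R)) (E1 (E2 \<Phi>))" by (intro pin_E1 pin_E2 box_finite box_dc p\<Phi>)
    have pE2: "pin (box (Suc R)) (E2 \<Phi>)" by (intro pin_E2 box_finite box_dc p\<Phi>)
    have "q3 (Suc R) d (\<lambda>k1 k2 k3. E1 (E2 \<Phi>) (of_int k2) (of_int k3) - E2 \<Phi> (of_int k1) (of_int k3)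
          + \<Phi> (of_int k1) (of_int k2) - u (of_int k2 + 1) (of_int k2))"
    proof (intro q3_diff q3_add)
      show "q3 (Suc R) d (\<lambda>k1 k2 k3. E1 (E2 \<Phi>) (of_int k2) (of_int k3))"
        by (rule q3_23[OF pEE box_finite]) (use bx d(1) in force)
      show "q3 (Suc R) d (\<lambda>k1 k2 k3. E2 \<Phi> (of_int k1) (of_int k3))"
        by (rule q3_13[OF pE2 box_finite]) (use bx in force)
      show "q3 (Suc R) d (\<lambda>k1 k2 k3. \<Phi> (of_int k1) (of_int k2))"
        by (rule q3_12[OF p\<Phi> box_finite]) (use bx d(1) in force)
      show "q3 (Suc R) d (\<lambda>k1 k2 k3. u (of_int k2 + 1) (of_int k2))"
        using q3_2[OF d(2)] .
    qed
    then show ?thesis unfolding Pform by (rule q3_poly3)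
  qed
  show ?thesis
  proof (intro conjI impI)
    obtain w0 where pw0: "pin (tri (R + 2)) w0" and dw0: "D1 (D2 w0) = Top A"
      using antidiff2[OF tri_finite pT tri_finite[of "R + 2"] tri_dc] by (auto simp: tri_def)
    have "upin (R + 2) (\<lambda>k. w (k + 1) k)"
      by (rule line_w[OF pin_mono[OF pw box_mono box_finite] pw0]) (use dw0 TA in auto)
    then show "poly3_deg2_le (\<lambda>k1 k2 k3. isum (\<lambda>l1. isum (\<lambda>l2. A (of_int l1) (of_int l2)) k2 k3) k1 k2
                        - A (of_int k2) (of_int k2)) (R + 2)"
      by (intro final key) auto
  next
    assume T0: "Top A = (\<lambda>x y. 0)"
    have "upin (R + 1) (\<lambda>k. w (k + 1) k)"
      by (rule line_w[of "R + 1" w "\<lambda>x y. 0"]) (use pw pin_zero T0 TA I10 in auto)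
    then show "poly3_deg2_le (\<lambda>k1 k2 k3. isum (\<lambda>l1. isum (\<lambda>l2. A (of_int l1) (of_int l2)) k2 k3) k1 k2
                        - A (of_int k2) (of_int k2)) (R + 1)"
      by (intro final key) auto
  qed
qed

end
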